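(* Let $A$ be a synaptic algebra, $p,q\in P$, and let $c:=(pqp+p^{\perp}q^{\perp}p^{\perp})^{1/2}$ and $s:=(pq^{\perp}p+p^{\perp}qp^{\perp})^{1/2}$ be the cosine and sine effects of $q$ with respect to $p$. The following are mutually equivalent: (i) $pCq$; (ii) $pqp^{\perp}+p^{\perp}qp=0$; (iii) $q=c^2p+s^2p^{\perp}$; (iv) $cs=0$; (v) $c$ and $s$ are projections and $c^{\perp}=s$; (vi) $c,s\in P$, $c^{\perp}=s$, and $q=cp+c^{\perp}p^{\perp}=s^{\perp}p+sp^{\perp}=|p-s|$; (vii) there exists a projection $t\in P$ such that $tCp$ and $q=|p-t|$.
   Context: Synaptic algebra (Foulis): $R$ is a real linear associative algebra with unit $1$, and $A\subseteq R$ is a real linear subspace with $1\in A$. For $a,b\in A$ write $aCb$ iff $ab=ba$; $C(a):=\{b\in A: aCb\}$; $CC(a):=\{b\in A: bCd \text{ for all } d\in C(a)\}$. $A$ is a synaptic algebra with enveloping algebra $R$ iff: (SA1) $A$ is a partially ordered archimedean real linear space with positive cone $A^+$, $1$ is an order unit, $\|\cdot\|$ the order-unit norm; (SA2) $a\in A\Rightarrow a^2\in A^+$; (SA3) $a,b\in A^+\Rightarrow aba\in A^+$; (SA4) if $a\in A$, $b\in A^+$, $aba=0$ then $ab=ba=0$; (SA5) if $a\in A^+$ there is $b\in A^+\cap CC(a)$ with $b^2=a$; (SA6) for $a\in A$ there is $p=p^2\in A$ with $ab=0\Leftrightarrow pb=0$ for all $b\in A$; (SA7) if $1\le a$ there is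 $b\in A$ with $ab=ba=1$; (SA8) if $a,b\in A$, $a_1\le a_2\le\cdots$ are pairwise commuting elements of $C(b)$ with $\|a-a_n\|\to0$, then $a\in C(b)$. $A$ is nondegenerate. Products are computed in $R$. $P:=\{p\in A:p=p^2\}$, $p^{\perp}:=1-p$. For $0\le a$, $a^{1/2}$ is its unique positive square root in $A$; $|a|:=(a^2)^{1/2}$. *)

theory Defs
  imports Complex_Main
begin

text \<open>A synaptic algebra A with enveloping algebra R: R is the type 'a (a real
  unital associative algebra), A is a subset of R, Apos is the positive cone A^+.\<close>

definition sa_le :: "'a::real_algebra_1 set \<Rightarrow> 'a \<Rightarrow> 'a \<Rightarrow> bool" where
  "sa_le Apos x y \<longleftrightarrow> y - x \<in> Apos"

definition sa_commute :: "'a::real_algebra_1 \<Rightarrow> 'a \<Rightarrow> bool" where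
  "sa_commute a b \<longleftrightarrow> a * b = b * a"

definition sa_C :: "'a::real_algebra_1 set \<Rightarrow> 'a \<Rightarrow> 'a set" where
  "sa_C A a = {b \<in> A. sa_commute a b}"

definition sa_CC :: "'a::real_algebra_1 set \<Rightarrow> 'a \<Rightarrow> 'a set" where
  "sa_CC A a = {b \<in> A. \<forall>d \<in> sa_C A a. sa_commute b d}"

definition ou_norm :: "'a::real_algebra_1 set \<Rightarrow> 'a \<Rightarrow> real" where
  "ou_norm Apos a = Inf {l::real. 0 < l \<and> sa_le Apos (- (l *\<^sub>R 1)) a \<and> sa_le Apos a (l *\<^sub>R 1)}"

definition synaptic_algebra :: "'a::real_algebra_1 set \<Rightarrow> 'a set \<Rightarrow> bool" where
  "synaptic_algebra A Apos \<longleftrightarrow>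
     \<comment> \<open>A is a real linear subspace of R containing 1\<close>
     0 \<in> A \<and> 1 \<in> A \<and> (\<forall>a\<in>A. \<forall>b\<in>A. a + b \<in> A) \<and> (\<forall>r::real. \<forall>a\<in>A. r *\<^sub>R a \<in> A) \<and>
     \<comment> \<open>SA1: partially ordered (positive cone), archimedean, 1 order unit\<close>
     Apos \<subseteq> A \<and> 0 \<in> Apos \<and> (\<forall>a\<in>Apos. \<forall>b\<in>Apos. a + b \<in> Apos) \<and>
     (\<forall>r::real. \<forall>a\<in>Apos. 0 \<le> r \<longrightarrow> r *\<^sub>R a \<in> Apos) \<and>
     (\<forall>a\<in>Apos. - a \<in> Apos \<longrightarrow> a = 0) \<and>
     (\<forall>a\<in>A. \<forall>b\<in>A. (\<forall>n::nat. sa_le Apos (real n *\<^sub>R a) b) \<longrightarrow> sa_le Apos a 0) \<and>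
     (\<forall>a\<in>A. \<exists>l::real. 0 < l \<and> sa_le Apos (- (l *\<^sub>R 1)) a \<and> sa_le Apos a (l *\<^sub>R 1)) \<and>
     \<comment> \<open>SA2\<close>
     (\<forall>a\<in>A. a * a \<in> Apos) \<and>
     \<comment> \<open>SA3\<close>
     (\<forall>a\<in>Apos. \<forall>b\<in>Apos. a * b * a \<in> Apos) \<and>
     \<comment> \<open>SA4\<close>
     (\<forall>a\<in>A. \<forall>b\<in>Apos. a * b * a = 0 \<longrightarrow> a * b = 0 \<and> b * a = 0) \<and>
     \<comment> \<open>SA5\<close>
     (\<forall>a\<in>Apos. \<exists>b\<in>Apos \<inter> sa_CC A a. b * b = a) \<and>
     \<comment> \<open>SA6\<close>
     (\<forall>a\<in>A. \<exists>p\<in>A. p = p * p \<and> (\<forall>b\<in>A. a * b = 0 \<longleftrightarrow> p * b = 0)) \<and>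
     \<comment> \<open>SA7\<close>
     (\<forall>a\<in>A. sa_le Apos 1 a \<longrightarrow> (\<exists>b\<in>A. a * b = 1 \<and> b * a = 1)) \<and>
     \<comment> \<open>SA8\<close>
     (\<forall>a\<in>A. \<forall>b\<in>A. \<forall>an::nat \<Rightarrow> 'a.
        (\<forall>n. an n \<in> sa_C A b) \<and> (\<forall>n. sa_le Apos (an n) (an (Suc n))) \<and>
        (\<forall>m n. sa_commute (an m) (an n)) \<and>
        (\<lambda>n. ou_norm Apos (a - an n)) \<longlonglongrightarrow> 0
        \<longrightarrow> a \<in> sa_C A b) \<and>
     \<comment> \<open>nondegenerate\<close>
     (0::'a) \<noteq> 1"

definition sa_P :: "'a::real_algebra_1 set \<Rightarrow> 'a set" where
  "sa_P A = {p \<in> A. p = p * p}"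

definition sa_sqrt :: "'a::real_algebra_1 set \<Rightarrow> 'a \<Rightarrow> 'a" where
  "sa_sqrt Apos a = (THE b. b \<in> Apos \<and> b * b = a)"

definition sa_abs :: "'a::real_algebra_1 set \<Rightarrow> 'a \<Rightarrow> 'a" where
  "sa_abs Apos a = sa_sqrt Apos (a * a)"

end

theory Submission
  imports Defs
begin

lemma sa_facts:
  assumes "synaptic_algebra A Apos"
  shows "1 \<in> A" "\<forall>a\<in>A. \<forall>b\<in>A. a + b \<in> A" "\<forall>r::real. \<forall>a\<in>A. r *\<^sub>R a \<in> A"
    "Apos \<subseteq> A" "\<forall>a\<in>Apos. \<forall>b\<in>Apos. a + b \<in> Apos"
    "\<forall>a\<in>Apos. - a \<in> Apos \<longrightarrow> a = 0"
    "\<forall>a\<in>A. a * a \<in> Apos"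
    "\<forall>a\<in>Apos. \<forall>b\<in>Apos. a * b * a \<in> Apos"
    "\<forall>a\<in>A. \<forall>b\<in>Apos. a * b * a = 0 \<longrightarrow> a * b = 0 \<and> b * a = 0"
    "\<forall>a\<in>Apos. \<exists>b\<in>Apos \<inter> sa_CC A a. b * b = a"
  using assms unfolding synaptic_algebra_def by simp_all

lemma sa_diff_mem:
  assumes SA: "synaptic_algebra A Apos" and "x \<in> A" "y \<in> A"
  shows "x - y \<in> A"
proof -
  have "(-1::real) *\<^sub>R y \<in> A" using sa_facts[OF SA] assms by blast
  then have "x + (-1::real) *\<^sub>R y \<in> A" using sa_facts[OF SA] assms by blast
  then show ?thesis by simp
qed

lemma sa_pos_comm_mult:
  assumes SA: "synaptic_algebra A Apos" and x: "x \<in> Apos" and y: "y \<in> Apos"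
    and xy: "x * y = y * x"
  shows "x * y \<in> Apos"
proof -
  have SA5: "\<forall>a\<in>Apos. \<exists>b\<in>Apos \<inter> sa_CC A a. b * b = a"
   and SA3: "\<forall>a\<in>Apos. \<forall>b\<in>Apos. a * b * a \<in> Apos"
   and PA: "Apos \<subseteq> A"
    using sa_facts[OF SA] by blast+
  obtain e where e: "e \<in> Apos" "e \<in> sa_CC A y" "e * e = y" using SA5 y by blast
  have "x \<in> sa_C A y" using x PA xy unfolding sa_C_def sa_commute_def by auto
  then have "e * x = x * e" using e(2) unfolding sa_CC_def sa_commute_def by auto
  then have "x * y = e * x * e" using e(3) by (metis mult.assoc)
  then show ?thesis using SA3 e(1) x by simp
qed

lemma sa_sqrt_props:
  assumes SA: "synaptic_algebra A Apos" and x: "x \<in> Apos"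
  shows "sa_sqrt Apos x \<in> Apos" "sa_sqrt Apos x * sa_sqrt Apos x = x"
    "sa_sqrt Apos x \<in> sa_CC A x"
    "\<And>y. y \<in> Apos \<Longrightarrow> y * y = x \<Longrightarrow> sa_sqrt Apos x = y"
proof -
  have SA5: "\<forall>a\<in>Apos. \<exists>b\<in>Apos \<inter> sa_CC A a. b * b = a"
   and SA4: "\<forall>a\<in>A. \<forall>b\<in>Apos. a * b * a = 0 \<longrightarrow> a * b = 0 \<and> b * a = 0"
   and SA2: "\<forall>a\<in>A. a * a \<in> Apos"
   and PA: "Apos \<subseteq> A" and A1: "1 \<in> A"
   and padd: "\<forall>a\<in>Apos. \<forall>b\<in>Apos. a + b \<in> Apos"
   and ppt: "\<forall>a\<in>Apos. - a \<in> Apos \<longrightarrow> a = 0"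
    using sa_facts[OF SA] by blast+
  obtain b where b: "b \<in> Apos" "b \<in> sa_CC A x" "b * b = x" using SA5 x by blast
  have uniq: "y = b" if y: "y \<in> Apos" "y * y = x" for y
  proof -
    have yx: "x * y = y * x" using y(2) by (metis mult.assoc)
    have "y \<in> A" using y PA by blast
    then have "y \<in> sa_C A x" using yx unfolding sa_C_def sa_commute_def by blast
    then have by': "b * y = y * b" using b(2) unfolding sa_CC_def sa_commute_def by auto
    define d where "d = b - y"
    have "b \<in> A" "y \<in> A" using b(1) y(1) PA by blast+
    then have dA: "d \<in> A" using sa_diff_mem[OF SA] unfolding d_def by blast
    have d2: "d * d \<in> Apos" using SA2 dA by blast
    have db: "d * b = b * d" unfolding d_def using by' by (simp add: algebra_simps)
    have dy: "d * y = y * d" unfolding d_def using by' by (simp add: algebra_simps)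
    have "d * (b + y) = b * b - y * y + (b * y - y * b)" unfolding d_def
      by (simp add: algebra_simps)
    then have zero: "d * (b + y) = 0" using by' b(3) y(2) by simp
    have P1: "d * d * b \<in> Apos"
    proof (rule sa_pos_comm_mult[OF SA d2 b(1)])
      have "d * d * b = d * (d * b)" by (simp add: mult.assoc)
      also have "\<dots> = d * (b * d)" using db by simp
      also have "\<dots> = (d * b) * d" by (simp add: mult.assoc)
      also have "\<dots> = (b * d) * d" using db by simp
      also have "\<dots> = b * (d * d)" by (simp add: mult.assoc)
      finally show "d * d * b = b * (d * d)" .
    qed
    have P2: "d * d * y \<in> Apos"
    proof (rule sa_pos_comm_mult[OF SA d2 y(1)])
      have "d * d * y = d * (d * y)" by (simp add: mult.assoc)
      also have "\<dots> = d * (y * d)" using dy by simp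
      also have "\<dots> = (d * y) * d" by (simp add: mult.assoc)
      also have "\<dots> = (y * d) * d" using dy by simp
      also have "\<dots> = y * (d * d)" by (simp add: mult.assoc)
      finally show "d * d * y = y * (d * d)" .
    qed
    have "d * d * b + d * d * y = d * (d * (b + y))" by (simp add: algebra_simps)
    then have "d * d * b + d * d * y = 0" using zero by simp
    moreover have "d * d * y = (d * d * b + d * d * y) - d * d * b" by simp
    ultimately have "d * d * y = - (d * d * b)" by simp
    then have "- (d * d * b) \<in> Apos" using P2 by simp
    then have z1: "d * d * b = 0" using ppt P1 by blast
    have z2: "d * d * y = 0" using \<open>d * d * y = - (d * d * b)\<close> z1 by simp
    have "d * b * d = d * (d * b)" by (subst db) (rule mult.assoc)
    then have "d * b * d = 0" using z1 by (simp add: mult.assoc)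
    then have e1: "d * b = 0" by (rule conjunct1[OF SA4[rule_format, OF dA b(1)]])
    have "d * y * d = d * (d * y)" by (subst dy) (rule mult.assoc)
    then have "d * y * d = 0" using z2 by (simp add: mult.assoc)
    then have e2: "d * y = 0" by (rule conjunct1[OF SA4[rule_format, OF dA y(1)]])
    have dd: "d * 1 * d = d * (b - y)" using d_def by simp
    have "d * (b - y) = d * b - d * y" by (simp add: right_diff_distrib)
    then have "d * 1 * d = 0" using dd e1 e2 by simp
    moreover have "1 * 1 \<in> Apos" using SA2 A1 by blast
    then have "1 \<in> Apos" by simp
    ultimately have "d * 1 = 0" by (intro conjunct1[OF SA4[rule_format, OF dA]])
    then have "d = 0" by simp
    then show ?thesis unfolding d_def by simp
  qed
  have the: "sa_sqrt Apos x = b"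
    unfolding sa_sqrt_def
  proof (rule the_equality)
    show "b \<in> Apos \<and> b * b = x" using b by blast
    show "\<And>y. y \<in> Apos \<and> y * y = x \<Longrightarrow> y = b" using uniq by blast
  qed
  show "sa_sqrt Apos x \<in> Apos" "sa_sqrt Apos x * sa_sqrt Apos x = x"
    "sa_sqrt Apos x \<in> sa_CC A x" unfolding the using b by blast+
  show "\<And>y. y \<in> Apos \<Longrightarrow> y * y = x \<Longrightarrow> sa_sqrt Apos x = y"
    unfolding the using uniq by blast
qed

theorem corollary5p7:
  fixes A Apos :: "'a::real_algebra_1 set" and p q :: 'a
  assumes SA: "synaptic_algebra A Apos"
    and hp: "p \<in> sa_P A" and hq: "q \<in> sa_P A"
  defines "c \<equiv> sa_sqrt Apos (p * q * p + (1 - p) * (1 - q) * (1 - p))"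
    and "s \<equiv> sa_sqrt Apos (p * (1 - q) * p + (1 - p) * q * (1 - p))"
  shows
   "(sa_commute p q \<longleftrightarrow> p * q * (1 - p) + (1 - p) * q * p = 0) \<and>
    (sa_commute p q \<longleftrightarrow> q = c * c * p + s * s * (1 - p)) \<and>
    (sa_commute p q \<longleftrightarrow> c * s = 0) \<and>
    (sa_commute p q \<longleftrightarrow> c \<in> sa_P A \<and> s \<in> sa_P A \<and> 1 - c = s) \<and>
    (sa_commute p q \<longleftrightarrow>
        c \<in> sa_P A \<and> s \<in> sa_P A \<and> 1 - c = s \<and>
        q = c * p + (1 - c) * (1 - p) \<and>
        q = (1 - s) * p + s * (1 - p) \<and>
        q = sa_abs Apos (p - s)) \<and>
    (sa_commute p q \<longleftrightarrow>
        (\<exists>t \<in> sa_P A. sa_commute t p \<and> q = sa_abs Apos (p - t)))"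
proof -
  have SA4: "\<forall>a\<in>A. \<forall>b\<in>Apos. a * b * a = 0 \<longrightarrow> a * b = 0 \<and> b * a = 0"
   and SA2: "\<forall>a\<in>A. a * a \<in> Apos"
   and SA3: "\<forall>a\<in>Apos. \<forall>b\<in>Apos. a * b * a \<in> Apos"
   and PA: "Apos \<subseteq> A" and A1: "1 \<in> A"
   and Aadd: "\<forall>a\<in>A. \<forall>b\<in>A. a + b \<in> A"
   and padd: "\<forall>a\<in>Apos. \<forall>b\<in>Apos. a + b \<in> Apos"
    using sa_facts[OF SA] by blast+
  have pA: "p \<in> A" and pp: "p * p = p" using hp unfolding sa_P_def by auto
  have qA: "q \<in> A" and qq: "q * q = q" using hq unfolding sa_P_def by auto
  have pp': "p*(p*x) = p*x" for x using pp by (metis mult.assoc)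
  have qq': "q*(q*x) = q*x" for x using qq by (metis mult.assoc)
  have p'A: "1 - p \<in> A" using sa_diff_mem[OF SA A1 pA] .
  have q'A: "1 - q \<in> A" using sa_diff_mem[OF SA A1 qA] .
  have pP: "p \<in> Apos" using SA2 pA pp by force
  have qP: "q \<in> Apos" using SA2 qA qq by force
  have "(1 - p) * (1 - p) = 1 - p" by (simp add: algebra_simps pp)
  then have p'P: "1 - p \<in> Apos" using SA2 p'A by metis
  have "(1 - q) * (1 - q) = 1 - q" by (simp add: algebra_simps qq)
  then have q'P: "1 - q \<in> Apos" using SA2 q'A by metis
  define a where "a = p * q * p + (1 - p) * (1 - q) * (1 - p)"
  define T where "T = p * q * (1 - p) + (1 - p) * q * p"
  have aP: "a \<in> Apos" unfolding a_def using SA3 padd pP qP p'P q'P by auto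
  have sarg: "p * (1 - q) * p + (1 - p) * q * (1 - p) = 1 - a"
    unfolding a_def by (simp add: algebra_simps pp pp' qq qq')
  have "p * (1 - q) * p + (1 - p) * q * (1 - p) \<in> Apos" using SA3 padd pP qP p'P q'P by simp
  then have a'P: "1 - a \<in> Apos" using sarg by simp
  have c_def': "c = sa_sqrt Apos a" unfolding c_def a_def ..
  have s_def': "s = sa_sqrt Apos (1 - a)" unfolding s_def sarg ..
  have cc: "c * c = a" using sa_sqrt_props(2)[OF SA aP] c_def' by simp
  have ss: "s * s = 1 - a" using sa_sqrt_props(2)[OF SA a'P] s_def' by simp
  have cPos: "c \<in> Apos" using sa_sqrt_props(1)[OF SA aP] c_def' by simp
  have TT: "T * T = a - a * a"
    unfolding T_def a_def by (simp add: algebra_simps pp pp' qq qq')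
  have pqA: "p * q + q * p \<in> A"
  proof -
    have "(p+q)*(p+q) \<in> A" using SA2 PA Aadd pA qA by blast
    moreover have "(p+q)*(p+q) = (p * q + q * p) + (p + q)"
      by (simp add: algebra_simps pp qq)
    ultimately have "(p * q + q * p) + (p + q) - (p + q) \<in> A"
      using sa_diff_mem[OF SA] Aadd pA qA by metis
    then show ?thesis by simp
  qed
  have pqpA: "p * q * p \<in> A" using SA3 PA pP qP by blast
  have TA: "T \<in> A"
  proof -
    have "p * q + q * p - p * q * p - p * q * p \<in> A"
      using sa_diff_mem[OF SA] pqA pqpA by metis
    moreover have "T = p * q + q * p - p * q * p - p * q * p"
      unfolding T_def by (simp add: algebra_simps pp pp')
    ultimately show ?thesis by simp
  qed
  have onePos: "1 \<in> Apos" using SA2 A1 by force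
  have K_T: "sa_commute p q \<longleftrightarrow> T = 0"
  proof
    assume "sa_commute p q"
    then have "p * q = q * p" unfolding sa_commute_def .
    then show "T = 0" unfolding T_def
      by (simp add: algebra_simps pp pp')
  next
    assume T0: "T = 0"
    have "p * T = p * q - p * q * p" unfolding T_def by (simp add: algebra_simps pp pp')
    moreover have "T * p = q * p - p * q * p" unfolding T_def
      by (simp add: algebra_simps pp pp' mult.assoc)
    ultimately show "sa_commute p q" using T0 unfolding sa_commute_def by simp
  qed
  have T_a: "T = 0 \<longleftrightarrow> a * a = a"
  proof
    assume "T = 0" then show "a * a = a" using TT by simp
  next
    assume "a * a = a"
    then have "T * 1 * T = 0" using TT by simp
    then show "T = 0" using SA4 TA onePos by force
  qed
  have K_a: "sa_commute p q \<longleftrightarrow> a * a = a" using K_T T_a by simp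
  have iii_id: "a * p + (1 - a) * (1 - p) = q - T"
    unfolding a_def T_def by (simp add: algebra_simps pp pp' qq qq')
  have comm_facts: "c = a \<and> s = 1 - a" if K: "sa_commute p q"
  proof -
    have aa: "a * a = a" using K K_a by simp
    have "c = a" using sa_sqrt_props(4)[OF SA aP aP aa] c_def' by simp
    moreover have "(1 - a) * (1 - a) = 1 - a" using aa by (simp add: algebra_simps)
    then have "s = 1 - a" using sa_sqrt_props(4)[OF SA a'P a'P] s_def' by simp
    ultimately show ?thesis by simp
  qed
  have aA: "a \<in> A" using aP PA by auto
  have a'A: "1 - a \<in> A" using a'P PA by auto
  have ap: "a * p = p * a" unfolding a_def by (simp add: algebra_simps pp pp')
  have abs_q: "sa_abs Apos (p - (1 - a)) = q" if K: "sa_commute p q"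
  proof -
    have qp: "q * p = p * q" using K unfolding sa_commute_def by simp
    have qp': "q * (p * x) = p * (q * x)" for x by (metis qp mult.assoc)
    have e: "p - (1 - a) = p * q + p * q - q"
      unfolding a_def by (simp add: algebra_simps pp pp' qq qq' qp qp')
    have "(p - (1 - a)) * (p - (1 - a)) = q" unfolding e
      by (simp add: algebra_simps pp pp' qq qq' qp qp')
    then show ?thesis unfolding sa_abs_def using sa_sqrt_props(4)[OF SA qP qP qq] by simp
  qed
  have i: "sa_commute p q \<longleftrightarrow> p * q * (1 - p) + (1 - p) * q * p = 0"
    using K_T unfolding T_def .
  have ii: "sa_commute p q \<longleftrightarrow> q = c * c * p + s * s * (1 - p)"
  proof -
    have "(q = q - T) = (T = 0)" by (simp add: eq_diff_eq)
    then show ?thesis unfolding cc ss iii_id K_T by simp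
  qed
  have iv: "sa_commute p q \<longleftrightarrow> c * s = 0"
  proof
    assume K: "sa_commute p q"
    have "a * a = a" using K K_a by simp
    then have "a * (1 - a) = 0" by (simp add: algebra_simps)
    then show "c * s = 0" using comm_facts[OF K] by simp
  next
    assume cs: "c * s = 0"
    have "c * c * (s * s) = c * (c * s) * s" by (simp add: mult.assoc)
    then have "a * (1 - a) = 0" using cs cc ss by simp
    then show "sa_commute p q" using K_a by (simp add: algebra_simps)
  qed
  have v: "sa_commute p q \<longleftrightarrow> c \<in> sa_P A \<and> s \<in> sa_P A \<and> 1 - c = s"
  proof
    assume K: "sa_commute p q"
    have aa: "a * a = a" using K K_a by simp
    show "c \<in> sa_P A \<and> s \<in> sa_P A \<and> 1 - c = s"
    proof -
      have cs: "c = a" "s = 1 - a" using comm_facts[OF K] by auto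
      have "(1 - a) * (1 - a) = 1 - a" using aa by (simp add: algebra_simps)
      then show ?thesis using cs aa aA a'A unfolding sa_P_def by simp
    qed
  next
    assume "c \<in> sa_P A \<and> s \<in> sa_P A \<and> 1 - c = s"
    then have "c = c * c" unfolding sa_P_def by auto
    then have "a * a = a" using cc by simp
    then show "sa_commute p q" using K_a by simp
  qed
  have vi: "sa_commute p q \<longleftrightarrow>
        c \<in> sa_P A \<and> s \<in> sa_P A \<and> 1 - c = s \<and>
        q = c * p + (1 - c) * (1 - p) \<and>
        q = (1 - s) * p + s * (1 - p) \<and>
        q = sa_abs Apos (p - s)"
  proof
    assume K: "sa_commute p q"
    have T0: "T = 0" using K K_T by simp
    show "c \<in> sa_P A \<and> s \<in> sa_P A \<and> 1 - c = s \<and>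
        q = c * p + (1 - c) * (1 - p) \<and>
        q = (1 - s) * p + s * (1 - p) \<and>
        q = sa_abs Apos (p - s)"
    proof -
      have v1: "c \<in> sa_P A \<and> s \<in> sa_P A \<and> 1 - c = s" using v K by blast
      have cs: "c = a" "s = 1 - a" using comm_facts[OF K] by auto
      have q1: "q = c * p + (1 - c) * (1 - p)" using iii_id T0 cs by simp
      have q2: "q = (1 - s) * p + s * (1 - p)" using iii_id T0 cs by simp
      have q3: "q = sa_abs Apos (p - s)" unfolding cs(2) abs_q[OF K] ..
      show ?thesis using v1 q1 q2 q3 by blast
    qed
  next
    assume "c \<in> sa_P A \<and> s \<in> sa_P A \<and> 1 - c = s \<and>
        q = c * p + (1 - c) * (1 - p) \<and>
        q = (1 - s) * p + s * (1 - p) \<and>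
        q = sa_abs Apos (p - s)"
    then show "sa_commute p q" using v by simp
  qed
  have vii: "sa_commute p q \<longleftrightarrow> (\<exists>t \<in> sa_P A. sa_commute t p \<and> q = sa_abs Apos (p - t))"
  proof
    assume K: "sa_commute p q"
    have s1: "s = 1 - a" using comm_facts[OF K] by simp
    have h1: "s \<in> sa_P A" "q = sa_abs Apos (p - s)" using vi K by blast+
    have "s * p = p * s" unfolding s1 using ap by (simp add: algebra_simps)
    then have "sa_commute s p" unfolding sa_commute_def .
    with h1 show "\<exists>t \<in> sa_P A. sa_commute t p \<and> q = sa_abs Apos (p - t)" by blast
  next
    assume "\<exists>t \<in> sa_P A. sa_commute t p \<and> q = sa_abs Apos (p - t)"
    then obtain t where t: "t \<in> sa_P A" "t * p = p * t" "q = sa_abs Apos (p - t)"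
      unfolding sa_commute_def by blast
    have tA: "t \<in> A" using t(1) unfolding sa_P_def by auto
    have dA: "p - t \<in> A" using sa_diff_mem[OF SA pA tA] .
    define x where "x = (p - t) * (p - t)"
    have xP: "x \<in> Apos" using SA2 dA unfolding x_def by auto
    have qx: "q = sa_sqrt Apos x" using t(3) unfolding sa_abs_def x_def .
    have qCC: "q \<in> sa_CC A x" using sa_sqrt_props(3)[OF SA xP] qx by simp
    have tp': "t * (p * y) = p * (t * y)" for y by (metis t(2) mult.assoc)
    have "x * p = p * x" unfolding x_def using t(2)
      by (simp add: algebra_simps pp pp' tp')
    then have "p \<in> sa_C A x" unfolding sa_C_def sa_commute_def using pA by simp
    then have "q * p = p * q" using qCC unfolding sa_CC_def sa_commute_def by auto
    then show "sa_commute p q" unfolding sa_commute_def by simp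
  qed
  show ?thesis by (rule conjI[OF i conjI[OF ii conjI[OF iv conjI[OF v conjI[OF vi vii]]]]])
qed

end
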